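(* Let $(w,d,N,L)$ be a stable, reduced Levi–Schubert quadruple, let $\underline\theta$ be a standard degree $r$ head of type $L$, and fix $1\le k\le b_L$. Then in the tableau $T_{\underline\theta}$: (1) boxes with entries in $\mathrm{Bl}_k$ occur only in rows with index $\ge h_1+\dots+h_{k-1}+1$; (2) boxes with entries smaller than the elements of $\mathrm{Bl}_k$ occur only in rows with index $\le N_1+\dots+N_{k-1}$; (3) if $p$ is a positive integer with $h_{k+1}+\dots+h_{b_L}<p$, then boxes with entries larger than the elements of $\mathrm{Bl}_k$ occur only in the bottom $p-1$ rows (rows $d-p+2,\dots,d$).
   Context: $G_{d,N}$ is the complex Grassmannian; $B\subset GL_N$ upper triangular. $I_{d,N}$ is the set of sequences $(i_1<\dots<i_d)$ in $\{1,\dots,N\}$, ordered componentwise. For $w=(\ell_1,\dots,\ell_d)\in I_{d,N}$, $X(w)$ is the closure of $B\cdot[e_{\ell_1}\wedge\dots\wedge e_{\ell_d}]$. A standard Levi $L\subseteq GL_N$ is given by $0=j_0<j_1<\dots<j_{b_L}=N$: invertible block diagonal matrices with blocks of sizes $N_k=j_k-j_{k-1}$; blocks $\mathrm{Bl}_k=\{j_{k-1}+1,\dots,j_k\}$. A Levi–Schubert quadruple $(w,d,N,L)$ is stable if $X(w)$ is $L$-stable under left multiplication, reduced if $\ell_1\ne1$ and $\ell_d=N$; $h_k=|\{j:\ell_j\in\mathrm{Bl}_k\}|$. A degree 1 head of type $L$ is $\theta\in I_{d,N}$ with $\theta\le w$ such that for each $k$ the entries of $\theta$ in $\mathrm{Bl}_k$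 are the largest elements of $\mathrm{Bl}_k$. A standard degree $r$ head is $(\theta_1,\dots,\theta_r)$, degree 1 heads with $\theta_1\ge\dots\ge\theta_r$; its tableau $T_{\underline\theta}$ has $d$ rows and $r$ columns, column $c$ listing top to bottom the (increasing) entries of $\theta_{r-c+1}$; rows are numbered $1,\dots,d$ from the top. *)

theory Defs
  imports "Jordan_Normal_Form.DL_Rank"
begin

(* ---------- Linear algebra over C^N (vectors indexed 0..N-1;
   the standard basis vector e_l, 1 <= l <= N, has its 1 at index l-1) ---------- *)

abbreviation CN :: "nat \<Rightarrow> (complex, complex vec) module" where
  "CN N \<equiv> module_vec TYPE(complex) N"

definition cdim :: "nat \<Rightarrow> complex vec set \<Rightarrow> nat" where
  "cdim N W = vectorspace.dim class_ring ((CN N)\<lparr>carrier := W\<rparr>)"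

definition grass :: "nat \<Rightarrow> nat \<Rightarrow> complex vec set set" where
  "grass d N = {V. subspace class_ring V (CN N) \<and> cdim N V = d}"

(* standard flag: F_i = span(e_1,...,e_i) *)
definition flag :: "nat \<Rightarrow> nat \<Rightarrow> complex vec set" where
  "flag N i = {v \<in> carrier_vec N. \<forall>t<N. i \<le> t \<longrightarrow> v $ t = 0}"

definition Idn :: "nat \<Rightarrow> nat \<Rightarrow> nat list set" where
  "Idn d N = {w. length w = d \<and> sorted_wrt (<) w \<and> set w \<subseteq> {1..N}}"

definition cle :: "nat list \<Rightarrow> nat list \<Rightarrow> bool" where
  "cle u w \<longleftrightarrow> length u = length w \<and> (\<forall>t<length w. u ! t \<le> w ! t)"

(* Schubert variety X(w) = closure of B.[e_{l_1} ^ ... ^ e_{l_d}], described by the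
   Schubert incidence conditions dim(V \<inter> F_{l_j}) >= j *)
definition schubert :: "nat \<Rightarrow> nat list \<Rightarrow> complex vec set set" where
  "schubert N w = {V \<in> grass (length w) N.
      \<forall>j\<in>{1..length w}. j \<le> cdim N (V \<inter> flag N (w ! (j - 1)))}"

definition levi_data :: "nat \<Rightarrow> (nat \<Rightarrow> nat) \<Rightarrow> nat \<Rightarrow> bool" where
  "levi_data N j b \<longleftrightarrow> 1 \<le> b \<and> j 0 = 0 \<and> j b = N \<and> (\<forall>k<b. j k < j (Suc k))"

definition Bl :: "(nat \<Rightarrow> nat) \<Rightarrow> nat \<Rightarrow> nat set" where
  "Bl j k = {j (k - 1) + 1 .. j k}"

definition Nblk :: "(nat \<Rightarrow> nat) \<Rightarrow> nat \<Rightarrow> nat" where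
  "Nblk j k = j k - j (k - 1)"

definition levi :: "nat \<Rightarrow> (nat \<Rightarrow> nat) \<Rightarrow> nat \<Rightarrow> complex mat set" where
  "levi N j b = {g \<in> carrier_mat N N. det g \<noteq> 0 \<and>
      (\<forall>p<N. \<forall>q<N. g $$ (p, q) \<noteq> 0 \<longrightarrow>
          (\<exists>k\<in>{1..b}. Suc p \<in> Bl j k \<and> Suc q \<in> Bl j k))}"

definition act :: "complex mat \<Rightarrow> complex vec set \<Rightarrow> complex vec set" where
  "act g V = (\<lambda>v. g *\<^sub>v v) ` V"

definition ls_quadruple :: "nat list \<Rightarrow> nat \<Rightarrow> nat \<Rightarrow> (nat \<Rightarrow> nat) \<Rightarrow> nat \<Rightarrow> bool" where
  "ls_quadruple w d N j b \<longleftrightarrow> w \<in> Idn d N \<and> levi_data N j b"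

definition ls_stable :: "nat list \<Rightarrow> nat \<Rightarrow> (nat \<Rightarrow> nat) \<Rightarrow> nat \<Rightarrow> bool" where
  "ls_stable w N j b \<longleftrightarrow> (\<forall>g\<in>levi N j b. \<forall>V\<in>schubert N w. act g V \<in> schubert N w)"

definition reduced :: "nat list \<Rightarrow> nat \<Rightarrow> bool" where
  "reduced w N \<longleftrightarrow> w \<noteq> [] \<and> hd w \<noteq> 1 \<and> last w = N"

definition hcount :: "nat list \<Rightarrow> (nat \<Rightarrow> nat) \<Rightarrow> nat \<Rightarrow> nat" where
  "hcount w j k = card {t. t < length w \<and> w ! t \<in> Bl j k}"

definition head1 :: "nat list \<Rightarrow> nat \<Rightarrow> nat \<Rightarrow> (nat \<Rightarrow> nat) \<Rightarrow> nat \<Rightarrow> nat list \<Rightarrow> bool" where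
  "head1 w d N j b \<theta> \<longleftrightarrow> \<theta> \<in> Idn d N \<and> cle \<theta> w \<and>
     (\<forall>k\<in>{1..b}. \<forall>x\<in>set \<theta> \<inter> Bl j k. \<forall>y\<in>Bl j k. x < y \<longrightarrow> y \<in> set \<theta>)"

(* standard degree r head (theta_1,...,theta_r), stored as list with theta_i = ths ! (i-1) *)
definition std_head :: "nat list \<Rightarrow> nat \<Rightarrow> nat \<Rightarrow> (nat \<Rightarrow> nat) \<Rightarrow> nat \<Rightarrow> nat \<Rightarrow> nat list list \<Rightarrow> bool" where
  "std_head w d N j b r ths \<longleftrightarrow> length ths = r \<and> (\<forall>i<r. head1 w d N j b (ths ! i)) \<and>
     (\<forall>i. Suc i < r \<longrightarrow> cle (ths ! (Suc i)) (ths ! i))"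

(* entry of the tableau T_theta in row i (1..d, from top) and column c (1..r):
   column c lists the entries of theta_{r-c+1} *)
definition tab :: "nat list list \<Rightarrow> nat \<Rightarrow> nat \<Rightarrow> nat" where
  "tab ths i c = (ths ! (length ths - c)) ! (i - 1)"

end

theory Submission
  imports Defs
begin

lemma jmono:
  assumes "levi_data N j b" "m \<le> n" "n \<le> b"
  shows "j m \<le> j n"
  using assms(2,3)
proof (induction n)
  case 0 then show ?case by simp
next
  case (Suc n)
  have "j n < j (Suc n)" using assms(1) Suc.prems unfolding levi_data_def by auto
  then show ?case using Suc by (cases "m = Suc n") auto
qed

lemma hsum:
  assumes "levi_data N j b" "m \<le> n" "n \<le> b"
  shows "(\<Sum>t=m+1..n. hcount w j t) = card {t. t < length w \<and> j m < w!t \<and> w!t \<le> j n}"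
  using assms(2,3)
proof (induction n)
  case 0 then show ?case by simp
next
  case (Suc n)
  show ?case
  proof (cases "m = Suc n")
    case True then show ?thesis by simp
  next
    case False
    then have mn: "m \<le> n" using Suc by simp
    have jm: "j m \<le> j n" using jmono[OF assms(1) mn] Suc by simp
    have jn: "j n < j (Suc n)" using assms(1) Suc.prems unfolding levi_data_def by auto
    have "(\<Sum>t=m+1..Suc n. hcount w j t) = (\<Sum>t=m+1..n. hcount w j t) + hcount w j (Suc n)"
      using mn by simp
    also have "\<dots> = card {t. t < length w \<and> j m < w!t \<and> w!t \<le> j n}
        + card {t. t < length w \<and> w ! t \<in> Bl j (Suc n)}"
      using Suc mn unfolding hcount_def by simp
    also have "\<dots> = card ({t. t < length w \<and> j m < w!t \<and> w!t \<le> j n}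
        \<union> {t. t < length w \<and> w ! t \<in> Bl j (Suc n)})"
      by (rule card_Un_disjoint[symmetric]) (auto simp: Bl_def)
    also have "({t. t < length w \<and> j m < w!t \<and> w!t \<le> j n}
        \<union> {t. t < length w \<and> w ! t \<in> Bl j (Suc n)}) = {t. t < length w \<and> j m < w!t \<and> w!t \<le> j (Suc n)}"
      using jm jn by (auto simp: Bl_def)
    finally show ?thesis .
  qed
qed

lemma nsum:
  assumes "levi_data N j b" "n \<le> b"
  shows "(\<Sum>t=1..n. Nblk j t) = j n"
  using assms(2)
proof (induction n)
  case 0 then show ?case using assms(1) by (simp add: levi_data_def)
next
  case (Suc n)
  have "j n < j (Suc n)" using assms(1) Suc.prems unfolding levi_data_def by auto
  then show ?case using Suc by (simp add: Nblk_def)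
qed

lemma nth_ge:
  assumes "sorted_wrt (<) xs" "set xs \<subseteq> {1..N}" "t < length xs"
  shows "t + 1 \<le> xs ! t"
  using assms(3)
proof (induction t)
  case 0 then show ?case using assms(2) nth_mem[of 0 xs] by force
next
  case (Suc t)
  have "xs ! t < xs ! Suc t" using assms(1) Suc.prems by (simp add: sorted_wrt_nth_less)
  then show ?case using Suc by simp
qed

theorem corollary5p2:
  fixes w :: "nat list" and d N b k r :: nat and j :: "nat \<Rightarrow> nat"
    and ths :: "nat list list"
  assumes quad: "ls_quadruple w d N j b"
    and st: "ls_stable w N j b"
    and red: "reduced w N"
    and head: "std_head w d N j b r ths"
    and k: "1 \<le> k" "k \<le> b"
  shows
    "(\<forall>i\<in>{1..d}. \<forall>c\<in>{1..r}. tab ths i c \<in> Bl j k \<longrightarrow>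
        (\<Sum>t=1..k-1. hcount w j t) + 1 \<le> i)
     \<and> (\<forall>i\<in>{1..d}. \<forall>c\<in>{1..r}. (\<forall>y\<in>Bl j k. tab ths i c < y) \<longrightarrow>
        i \<le> (\<Sum>t=1..k-1. Nblk j t))
     \<and> (\<forall>p::nat. 0 < p \<longrightarrow> (\<Sum>t=k+1..b. hcount w j t) < p \<longrightarrow>
        (\<forall>i\<in>{1..d}. \<forall>c\<in>{1..r}. (\<forall>y\<in>Bl j k. y < tab ths i c) \<longrightarrow>
           d + 2 \<le> i + p))"
proof -
  have ld: "levi_data N j b" and wI: "w \<in> Idn d N" using quad by (auto simp: ls_quadruple_def)
  have wl: "length w = d" and ws: "sorted_wrt (<) w" and wset: "set w \<subseteq> {1..N}"
    using wI by (auto simp: Idn_def)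
  have jb: "j b = N" and j0: "j 0 = 0" using ld by (auto simp: levi_data_def)
  have jk: "j (k-1) < j k" using ld k unfolding levi_data_def
    by (cases k) auto
  have col: "ths ! (r - c) \<in> Idn d N \<and> cle (ths ! (r - c)) w" if "c \<in> {1..r}" for c
  proof -
    have "r - c < r" using that by auto
    then have "head1 w d N j b (ths ! (r - c))" using head unfolding std_head_def by blast
    then show ?thesis unfolding head1_def by blast
  qed
  have hr: "length ths = r" using head by (simp add: std_head_def)
  have tabeq: "tab ths i c = ths ! (r-c) ! (i-1)" for i c by (simp add: tab_def hr)
  have wnth: "w ! t \<in> {1..N}" if "t < d" for t using wset that wl nth_mem by blast
  have P1: "(\<Sum>t=1..k-1. hcount w j t) + 1 \<le> i"
    if i: "i \<in> {1..d}" and c: "c \<in> {1..r}" and tb: "tab ths i c \<in> Bl j k" for i c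
  proof (rule ccontr)
    assume "\<not> ?thesis"
    then have iH: "i \<le> (\<Sum>t=1..k-1. hcount w j t)" by simp
    have H: "(\<Sum>t=1..k-1. hcount w j t) = card {t. t < d \<and> j 0 < w!t \<and> w!t \<le> j (k-1)}"
      using hsum[OF ld, of 0 "k-1" w] k wl by simp
    have "w ! (i-1) \<le> j (k-1)"
    proof (rule ccontr)
      assume a: "\<not> ?thesis"
      have "{t. t < d \<and> j 0 < w!t \<and> w!t \<le> j (k-1)} \<subseteq> {0..<i-1}"
      proof
        fix t assume t: "t \<in> {t. t < d \<and> j 0 < w!t \<and> w!t \<le> j (k-1)}"
        show "t \<in> {0..<i-1}"
        proof (rule ccontr)
          assume "t \<notin> {0..<i-1}"
          then have "i - 1 \<le> t" by simp
          then have "w ! (i-1) \<le> w ! t" using ws t wl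
            by (metis (no_types, lifting) le_eq_less_or_eq mem_Collect_eq sorted_wrt_nth_less)
          then show False using a t by simp
        qed
      qed
      then have "card {t. t < d \<and> j 0 < w!t \<and> w!t \<le> j (k-1)} \<le> i - 1"
        using card_mono[of "{0..<i-1}"] by simp
      moreover have "1 \<le> i" using i by simp
      ultimately show False using iH H by linarith
    qed
    moreover have "tab ths i c \<le> w ! (i-1)"
    proof -
      have "i - 1 < length w" using i wl by auto
      then show ?thesis using col[OF c] unfolding tabeq cle_def by blast
    qed
    ultimately show False using tb by (simp add: Bl_def)
  qed
  have P2: "i \<le> (\<Sum>t=1..k-1. Nblk j t)"
    if i: "i \<in> {1..d}" and c: "c \<in> {1..r}" and tb: "\<forall>y\<in>Bl j k. tab ths i c < y" for i c
  proof -
    have "j (k-1) + 1 \<in> Bl j k" using jk by (simp add: Bl_def)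
    then have "tab ths i c \<le> j (k-1)" using tb by fastforce
    moreover have "i \<le> tab ths i c" using col[OF c] i nth_ge[of "ths ! (r-c)" N "i-1"]
      unfolding tabeq Idn_def by auto
    ultimately show ?thesis using nsum[OF ld, of "k-1"] k by simp
  qed
  have P3: "d + 2 \<le> i + p"
    if p: "(\<Sum>t=k+1..b. hcount w j t) < p" and i: "i \<in> {1..d}" and c: "c \<in> {1..r}"
      and tb: "\<forall>y\<in>Bl j k. y < tab ths i c" for p i c
  proof -
    have S: "(\<Sum>t=k+1..b. hcount w j t) = card {t. t < d \<and> j k < w!t \<and> w!t \<le> j b}"
      using hsum[OF ld, of k b w] k wl by simp
    let ?th = "ths ! (r - c)"
    have thI: "length ?th = d" "sorted_wrt (<) ?th" and cl: "cle ?th w"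
      using col[OF c] by (auto simp: Idn_def)
    have "j k \<in> Bl j k" using jk by (simp add: Bl_def)
    then have gt: "j k < ?th ! (i-1)" using tb unfolding tabeq by auto
    have "{i-1..<d} \<subseteq> {t. t < d \<and> j k < w!t \<and> w!t \<le> j b}"
    proof
      fix t assume t: "t \<in> {i-1..<d}"
      have "?th ! (i-1) \<le> ?th ! t" using thI t
        by (metis atLeastLessThan_iff le_eq_less_or_eq sorted_wrt_nth_less)
      moreover have "?th ! t \<le> w ! t" using cl t wl unfolding cle_def by auto
      ultimately show "t \<in> {t. t < d \<and> j k < w!t \<and> w!t \<le> j b}"
        using gt t wnth[of t] jb by auto
    qed
    then have "card {i-1..<d} \<le> card {t. t < d \<and> j k < w!t \<and> w!t \<le> j b}"
      by (intro card_mono) auto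
    then show ?thesis using S p i by simp
  qed
  show ?thesis using P1 P2 P3 by blast
qed

end
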